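(* Let $k$ be a non-archimedean local field of residue characteristic $2$. Let $B(x)=\Delta x^2$ on $k$, where $|\Delta|=|\varpi|$. Let $z=q^{-\beta}$, $w=zq^{-1}$, and $t\in\mathfrak o\setminus\{0\}$ with $|t|=q^{-T}$. If $|2|\ge|t^2|$, then \[ X^B(\beta;t^2)=|\varpi|^{\lfloor e/2\rfloor}\,\frac{1-(zw)^{T+1-\lceil e/2\rceil}}{1-zw} + z\,|\varpi|^{\lceil e/2\rceil}\,\frac{1-(zw)^{T-\lfloor e/2\rfloor}}{1-zw}, \] and $X^B(\beta;t^2)=0$ otherwise.
   Context: $k$ has ring of integers $\mathfrak o$, uniformizer $\varpi$, residue field of cardinality $q$, absolute value normalized by $|\varpi|=q^{-1}$, and $e=\operatorname{ord}(2)$ is the ramification index. On $\mathfrak o^n$ use the additive Haar measure of total mass $1$. For a quadratic form $B$ on $k^n$, $\rho\in\mathfrak o$ and integer $\ell\ge0$: $X_\ell^B(\rho)=\operatorname{meas}\{x\in\mathfrak o^n: B(x)-\rho\in 2\varpi^\ell\mathfrak o\}$ and $X^B(\beta;\rho)=\sum_{\ell\ge0}z^\ell X_\ell^B(\rho)$ with $z=q^{-\beta}$. *)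

theory Defs
  imports "HOL-Analysis.Analysis"
begin

definition vint :: "('a::field \<Rightarrow> real) \<Rightarrow> 'a set" where
  "vint av = {x. av x \<le> 1}"

definition residue_classes :: "('a::field \<Rightarrow> real) \<Rightarrow> 'a set set" where
  "residue_classes av = (\<lambda>x. {y \<in> vint av. av (x - y) < 1}) ` vint av"

definition nonarch_local_field :: "('a::field \<Rightarrow> real) \<Rightarrow> 'a \<Rightarrow> nat \<Rightarrow> bool" where
  "nonarch_local_field av w0 q \<longleftrightarrow>
     (\<forall>x. 0 \<le> av x) \<and> (\<forall>x. av x = 0 \<longleftrightarrow> x = 0) \<and>
     (\<forall>x y. av (x * y) = av x * av y) \<and>
     (\<forall>x y. av (x + y) \<le> max (av x) (av y)) \<and>
     1 < q \<and> w0 \<in> vint av \<and> av w0 = 1 / real q \<and>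
     (\<forall>x. x \<noteq> 0 \<longrightarrow> (\<exists>n::int. av x = real q powi n)) \<and>
     finite (residue_classes av) \<and> card (residue_classes av) = q \<and>
     (\<forall>f::nat \<Rightarrow> 'a. (\<forall>\<epsilon>>0. \<exists>N. \<forall>m\<ge>N. \<forall>n\<ge>N. av (f m - f n) < \<epsilon>) \<longrightarrow>
        (\<exists>L. \<forall>\<epsilon>>0. \<exists>N. \<forall>n\<ge>N. av (f n - L) < \<epsilon>))"

definition residue_char_2 :: "('a::field \<Rightarrow> real) \<Rightarrow> bool" where
  "residue_char_2 av \<longleftrightarrow> av 2 < 1"

definition ord :: "('a::field \<Rightarrow> real) \<Rightarrow> nat \<Rightarrow> 'a \<Rightarrow> int" where
  "ord av q x = (THE n::int. av x = real q powi (- n))"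

text \<open>Additive Haar measure of total mass 1 on the ring of integers, for closed
  subsets S: the infimum over m of (number of cosets of w0^m o meeting S) / q^m.\<close>
definition haar_o :: "('a::field \<Rightarrow> real) \<Rightarrow> nat \<Rightarrow> 'a set \<Rightarrow> real" where
  "haar_o av q S = (INF m::nat.
      real (card ((\<lambda>x. {y \<in> vint av. av (x - y) \<le> (1 / real q) ^ m}) ` S)) / real q ^ m)"

definition Xl :: "('a::field \<Rightarrow> real) \<Rightarrow> 'a \<Rightarrow> nat \<Rightarrow> 'a \<Rightarrow> 'a \<Rightarrow> nat \<Rightarrow> real" where
  "Xl av w0 q Delta rho l = haar_o av q
     {x \<in> vint av. \<exists>y \<in> vint av. Delta * x ^ 2 - rho = 2 * w0 ^ l * y}"

definition XB :: "('a::field \<Rightarrow> real) \<Rightarrow> 'a \<Rightarrow> nat \<Rightarrow> 'a \<Rightarrow> complex \<Rightarrow> 'a \<Rightarrow> complex" where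
  "XB av w0 q Delta beta rho =
     (\<Sum>l. ((of_nat q :: complex) powr (- beta)) ^ l * complex_of_real (Xl av w0 q Delta rho l))"

end

theory Submission
  imports Defs
begin


locale nalf =
  fixes av :: "'a::field \<Rightarrow> real" and w0 :: 'a and q :: nat
  assumes nlf: "nonarch_local_field av w0 q"
begin

abbreviation "r \<equiv> 1 / real q"

lemmas D = nlf[unfolded nonarch_local_field_def]
lemma nonneg: "0 \<le> av x" using D[THEN conjunct1] by (rule spec)
lemma zero_iff: "av x = 0 \<longleftrightarrow> x = 0" using D[THEN conjunct2, THEN conjunct1] by (rule spec)
lemma mult: "av (x * y) = av x * av y" using D[THEN conjunct2, THEN conjunct2, THEN conjunct1] by blast
lemma ultra: "av (x + y) \<le> max (av x) (av y)" using D[THEN conjunct2, THEN conjunct2, THEN conjunct2, THEN conjunct1] by blast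
lemmas D5 = D[THEN conjunct2, THEN conjunct2, THEN conjunct2, THEN conjunct2]
lemma q_gt1: "1 < q" using D5[THEN conjunct1] .
lemma w0_val: "av w0 = r" using D5[THEN conjunct2, THEN conjunct2, THEN conjunct1] .
lemma disc: "x \<noteq> 0 \<Longrightarrow> \<exists>n::int. av x = real q powi n" using D5[THEN conjunct2, THEN conjunct2, THEN conjunct2, THEN conjunct1] by blast
lemma rc_fin: "finite (residue_classes av)" using D5[THEN conjunct2, THEN conjunct2, THEN conjunct2, THEN conjunct2, THEN conjunct1] .
lemma rc_card: "card (residue_classes av) = q" using D5[THEN conjunct2, THEN conjunct2, THEN conjunct2, THEN conjunct2, THEN conjunct2, THEN conjunct1] .

lemma r_pos: "0 < r" using q_gt1 by simp
lemma r_lt1: "r < 1" using q_gt1 by simp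

lemma av0[simp]: "av 0 = 0" using zero_iff by simp

lemma av1[simp]: "av 1 = 1"
proof -
  have h: "av 1 = av 1 * av 1" using mult[of 1 1] by simp
  have nz: "av 1 \<noteq> 0" using zero_iff[of 1] by simp
  from h have "av 1 * (av 1 - 1) = 0" by (simp add: algebra_simps)
  with nz show ?thesis by simp
qed

lemma avm1[simp]: "av (-1) = 1"
proof -
  have "av (-1) * av (-1) = 1" using mult[of "-1" "-1"] by simp
  moreover have "0 \<le> av (-1)" by (rule nonneg)
  ultimately have "(av (-1) - 1) * (av (-1) + 1) = 0" by (simp add: algebra_simps)
  then show ?thesis using \<open>0 \<le> av (-1)\<close> by auto
qed

lemma avneg[simp]: "av (- x) = av x"
  using mult[of "-1" x] by simp

lemma avsym: "av (x - y) = av (y - x)"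
  using avneg[of "y - x"] by simp

lemma avpow: "av (x ^ n) = av x ^ n"
  by (induction n) (auto simp: mult)

lemma avdiv: "av (x / y) = av x / av y"
proof (cases "y = 0")
  case True then show ?thesis by simp
next
  case False
  have "av x = av (x / y) * av y" using mult[of "x/y" y] False by simp
  moreover have "av y \<noteq> 0" using False zero_iff by simp
  ultimately show ?thesis by simp
qed

lemma ultra_diff: "av (x - y) \<le> max (av x) (av y)"
  using ultra[of x "-y"] by simp

lemma strict: assumes "av y < av x" shows "av (x + y) = av x"
proof -
  have "av x = av ((x + y) + (- y))" by simp
  also have "\<dots> \<le> max (av (x+y)) (av (- y))" by (rule ultra)
  also have "\<dots> = max (av (x+y)) (av y)" by simp
  finally have 1: "av x \<le> av (x + y)" using assms by linarith
  have "av (x+y) \<le> av x" using ultra[of x y] assms by simp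
  with 1 show ?thesis by simp
qed

lemma vint_add: "x \<in> vint av \<Longrightarrow> y \<in> vint av \<Longrightarrow> x + y \<in> vint av"
  using ultra[of x y] unfolding vint_def by auto
lemma vint_diff: "x \<in> vint av \<Longrightarrow> y \<in> vint av \<Longrightarrow> x - y \<in> vint av"
  using ultra_diff[of x y] unfolding vint_def by auto
lemma vint_mult: "x \<in> vint av \<Longrightarrow> y \<in> vint av \<Longrightarrow> x * y \<in> vint av"
  unfolding vint_def by (simp add: mult mult_le_one nonneg)

lemma disc_nat: assumes "x \<noteq> 0" "av x \<le> 1" shows "\<exists>n::nat. av x = r ^ n"
proof -
  obtain k :: int where k: "av x = real q powi k" using disc assms by blast
  have "k \<le> 0"
  proof (rule ccontr)
    assume "\<not> k \<le> 0"
    then have "real q powi 0 < real q powi k"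
      using q_gt1 by (intro power_int_strict_increasing) auto
    with k assms show False by simp
  qed
  then obtain n :: nat where "k = - int n" by (rule nonpos_int_cases)
  with k have "av x = inverse (real q ^ n)" by (simp add: power_int_minus)
  then have "av x = r ^ n" by (simp add: power_one_over divide_inverse power_inverse)
  then show ?thesis by blast
qed

lemma r_pow_le_iff: "r ^ m \<le> r ^ n \<longleftrightarrow> n \<le> m"
  using r_pos r_lt1 by (simp add: power_decreasing_iff)

lemma r_pow_lt_iff: "r ^ m < r ^ n \<longleftrightarrow> n < m"
  using r_pos r_lt1 by (simp add: power_strict_decreasing_iff)

lemma step_down: assumes "av x < r ^ m" shows "av x \<le> r ^ Suc m"
proof (cases "x = 0")
  case True then show ?thesis by simp
next
  case False
  have "r ^ m \<le> 1" using r_pos r_lt1 by (simp add: power_le_one)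
  then obtain n where n: "av x = r ^ n" using disc_nat[OF False] assms by fastforce
  then have "m < n" using assms r_pow_lt_iff by simp
  then show ?thesis unfolding n by (subst r_pow_le_iff) simp
qed

end



context nalf
begin

definition bl :: "nat \<Rightarrow> 'a \<Rightarrow> 'a set" where
  "bl m x = {y \<in> vint av. av (x - y) \<le> (1 / real q) ^ m}"
definition cls :: "'a \<Rightarrow> 'a set" where
  "cls x = {y \<in> vint av. av (x - y) < 1}"
definition Bk :: "nat \<Rightarrow> 'a set" where
  "Bk k = {x \<in> vint av. av x \<le> r ^ k}"
definition rep :: "'a set \<Rightarrow> 'a" where
  "rep C = (SOME a. a \<in> vint av \<and> cls a = C)"
definition cen :: "nat \<Rightarrow> 'a set \<Rightarrow> 'a" where
  "cen m D = (SOME c. c \<in> vint av \<and> bl m c = D)"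

lemma haar_alt: "haar_o av q S = (INF m. real (card (bl m ` S)) / real q ^ m)"
  unfolding haar_o_def bl_def by simp

lemma rc_alt: "residue_classes av = cls ` vint av"
  unfolding residue_classes_def cls_def by simp

lemma rpow_pos: "0 < r ^ m" using r_pos by simp
lemma rpow_le1: "r ^ m \<le> 1" using r_pos r_lt1 by (simp add: power_le_one)

lemma bl_sub: "bl m x \<subseteq> vint av" unfolding bl_def by auto

lemma bl_same: assumes "y \<in> bl m x" shows "bl m y = bl m x"
proof
  have y: "av (x - y) \<le> r ^ m" using assms unfolding bl_def by (simp add: power_one_over)
  show "bl m y \<subseteq> bl m x"
  proof
    fix z assume "z \<in> bl m y"
    then have z: "z \<in> vint av" "av (y - z) \<le> r ^ m" unfolding bl_def by (auto simp: power_one_over)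
    have "av (x - z) = av ((x - y) + (y - z))" by simp
    also have "\<dots> \<le> max (av (x - y)) (av (y - z))" by (rule ultra)
    finally have "av (x - z) \<le> r ^ m" using y z by simp
    then show "z \<in> bl m x" using z unfolding bl_def by (simp add: power_one_over)
  qed
  show "bl m x \<subseteq> bl m y"
  proof
    fix z assume "z \<in> bl m x"
    then have z: "z \<in> vint av" "av (x - z) \<le> r ^ m" unfolding bl_def by (auto simp: power_one_over)
    have "av (y - z) = av ((y - x) + (x - z))" by simp
    also have "\<dots> \<le> max (av (y - x)) (av (x - z))" by (rule ultra)
    finally have "av (y - z) \<le> r ^ m" using y z avsym[of y x] by simp
    then show "z \<in> bl m y" using z unfolding bl_def by (simp add: power_one_over)
  qed
qed

lemma bl_eq_iff: assumes "x \<in> vint av" "y \<in> vint av"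
  shows "bl m x = bl m y \<longleftrightarrow> av (x - y) \<le> r ^ m"
proof
  assume eq: "bl m x = bl m y"
  have "y \<in> bl m y" using assms rpow_pos[of m] unfolding bl_def by (simp add: power_one_over less_imp_le)
  then have "y \<in> bl m x" using eq by simp
  then show "av (x - y) \<le> r ^ m" unfolding bl_def by (simp add: power_one_over)
next
  assume "av (x - y) \<le> r ^ m"
  then have "y \<in> bl m x" using assms unfolding bl_def by (simp add: power_one_over)
  from bl_same[OF this] show "bl m x = bl m y" by simp
qed

lemma bl0: assumes "x \<in> vint av" shows "bl 0 x = vint av"
proof -
  have "av (x - y) \<le> 1" if "y \<in> vint av" for y
    using ultra_diff[of x y] assms that unfolding vint_def by simp
  then show ?thesis unfolding bl_def by auto
qed

lemma cls_same: assumes "av (x - y) < 1" shows "cls x = cls y"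
proof -
  have "av (y - z) < 1" if "av (x - z) < 1" for z
  proof -
    have "av (y - z) = av ((y - x) + (x - z))" by simp
    also have "\<dots> \<le> max (av (y - x)) (av (x - z))" by (rule ultra)
    finally show ?thesis using assms that avsym[of y x] by simp
  qed
  moreover have "av (x - z) < 1" if "av (y - z) < 1" for z
  proof -
    have "av (x - z) = av ((x - y) + (y - z))" by simp
    also have "\<dots> \<le> max (av (x - y)) (av (y - z))" by (rule ultra)
    finally show ?thesis using assms that by simp
  qed
  ultimately show ?thesis unfolding cls_def by auto
qed

lemma rep: assumes "C \<in> residue_classes av" shows "rep C \<in> vint av" "cls (rep C) = C"
proof -
  have "\<exists>a. a \<in> vint av \<and> cls a = C" using assms rc_alt by auto
  then have "rep C \<in> vint av \<and> cls (rep C) = C" unfolding rep_def by (rule someI_ex)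
  then show "rep C \<in> vint av" "cls (rep C) = C" by auto
qed

lemma cen: assumes "D \<in> bl m ` vint av" shows "cen m D \<in> vint av" "bl m (cen m D) = D"
proof -
  have "\<exists>c. c \<in> vint av \<and> bl m c = D" using assms by auto
  then have "cen m D \<in> vint av \<and> bl m (cen m D) = D" unfolding cen_def by (rule someI_ex)
  then show "cen m D \<in> vint av" "bl m (cen m D) = D" by auto
qed

lemma w0_vint: "w0 \<in> vint av" using w0_val r_lt1 unfolding vint_def by simp
lemma w0pow_vint: "w0 ^ m \<in> vint av"
proof (induction m)
  case 0 show ?case by (simp add: vint_def)
next
  case (Suc m) then show ?case by (simp add: vint_mult w0_vint)
qed
lemma av_w0pow: "av (w0 ^ m) = r ^ m" by (simp add: avpow w0_val)
lemma w0pow_nz: "w0 ^ m \<noteq> 0"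
proof
  assume "w0 ^ m = 0"
  then have "av (w0 ^ m) = av 0" by (rule arg_cong)
  with av_w0pow[of m] rpow_pos[of m] av0 show False by linarith
qed

definition g :: "nat \<Rightarrow> 'a set \<times> 'a set \<Rightarrow> 'a set" where
  "g m DC = bl (Suc m) (cen m (fst DC) + w0 ^ m * rep (snd DC))"

lemma fin_bl: "finite (bl m ` vint av)"
proof (induction m)
  case 0
  have "bl 0 ` vint av \<subseteq> {vint av}" using bl0 by auto
  then show ?case using finite_subset by blast
next
  case (Suc m)
  have "bl (Suc m) ` vint av \<subseteq> g m ` (bl m ` vint av \<times> residue_classes av)"
  proof
    fix E assume "E \<in> bl (Suc m) ` vint av"
    then obtain x where x: "x \<in> vint av" "E = bl (Suc m) x" by auto
    define D where "D = bl m x"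
    have D: "D \<in> bl m ` vint av" using x D_def by auto
    define c where "c = cen m D"
    have c: "c \<in> vint av" "bl m c = bl m x" using cen[OF D] c_def D_def by auto
    have cx: "av (x - c) \<le> r ^ m" using c x bl_eq_iff[of c x m] avsym[of x c] by simp
    define u where "u = (x - c) / w0 ^ m"
    have xu: "x - c = w0 ^ m * u" unfolding u_def using w0pow_nz by simp
    have "av u \<le> 1" unfolding u_def using cx rpow_pos[of m] by (simp add: avdiv av_w0pow)
    then have u: "u \<in> vint av" unfolding vint_def by simp
    define C where "C = cls u"
    have C: "C \<in> residue_classes av" using u rc_alt C_def by auto
    define a where "a = rep C"
    have a: "a \<in> vint av" "cls a = cls u" using rep[OF C] a_def C_def by auto
    have "u \<in> cls u" using u unfolding cls_def by simp
    then have "u \<in> cls a" using a by simp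
    then have "av (a - u) < 1" unfolding cls_def by simp
    then have au: "av (a - u) \<le> r" using step_down[of "a - u" 0] by simp
    have "x - (c + w0 ^ m * a) = w0 ^ m * (u - a)" using xu by (simp add: algebra_simps)
    then have "av (x - (c + w0 ^ m * a)) = r ^ m * av (a - u)"
      by (simp add: mult av_w0pow avsym[of u a])
    also have "\<dots> \<le> r ^ m * r" using au rpow_pos[of m] by (intro mult_left_mono) auto
    also have "\<dots> = r ^ Suc m" by (simp only: power_Suc mult.commute)
    finally have le: "av (x - (c + w0 ^ m * a)) \<le> r ^ Suc m" .
    have "c + w0 ^ m * a \<in> vint av" using c a w0pow_vint vint_add vint_mult by blast
    then have "bl (Suc m) x = bl (Suc m) (c + w0 ^ m * a)"
      using bl_eq_iff[OF x(1)] le by blast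
    then have "E = g m (D, C)" unfolding g_def using x c_def a_def by simp
    then show "E \<in> g m ` (bl m ` vint av \<times> residue_classes av)"
      using D C by blast
  qed
  moreover have "finite (g m ` (bl m ` vint av \<times> residue_classes av))"
    using Suc rc_fin by simp
  ultimately show ?case using finite_subset by blast
qed

lemma fin_blS: assumes "S \<subseteq> vint av" shows "finite (bl m ` S)"
proof -
  have "bl m ` S \<subseteq> bl m ` vint av" using assms by (rule image_mono)
  then show ?thesis using fin_bl by (rule finite_subset)
qed

end



context nalf
begin

lemma Bk_sub: "Bk k \<subseteq> vint av" unfolding Bk_def by auto
lemma zero_Bk: "0 \<in> Bk k" unfolding Bk_def vint_def using rpow_pos[of k] by simp

lemma bl_zero: "bl k 0 = Bk k" unfolding bl_def Bk_def by (simp add: power_one_over)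

lemma bl_Bk: "bl k ` Bk k = {Bk k}"
proof -
  have "bl k x = Bk k" if "x \<in> Bk k" for x
  proof -
    have x: "x \<in> vint av" "av x \<le> r ^ k" using that unfolding Bk_def by auto
    have "0 \<in> vint av" unfolding vint_def by simp
    then have "bl k x = bl k 0" using bl_eq_iff[OF x(1)] x by simp
    then show ?thesis using bl_zero by simp
  qed
  then show ?thesis using zero_Bk by blast
qed

lemma grow: assumes "k \<le> m"
  shows "card (bl m ` Bk k) * q \<le> card (bl (Suc m) ` Bk k)"
proof -
  let ?A = "bl m ` Bk k \<times> residue_classes av"
  have mem: "cen m D \<in> Bk k \<and> cen m D \<in> vint av \<and> bl m (cen m D) = D" if "D \<in> bl m ` Bk k" for D
  proof -
    obtain x where x: "x \<in> Bk k" "D = bl m x" using \<open>D \<in> bl m ` Bk k\<close> by auto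
    have xv: "x \<in> vint av" using x Bk_sub by auto
    have D: "D \<in> bl m ` vint av" using x xv by auto
    have c: "cen m D \<in> vint av" "bl m (cen m D) = D" using cen[OF D] by auto
    have "av (cen m D - x) \<le> r ^ m" using c x xv bl_eq_iff by simp
    moreover have "r ^ m \<le> r ^ k" using assms r_pow_le_iff by simp
    moreover have "av x \<le> r ^ k" using x unfolding Bk_def by simp
    moreover have "av (cen m D) = av ((cen m D - x) + x)" by simp
    moreover have "av ((cen m D - x) + x) \<le> max (av (cen m D - x)) (av x)" by (rule ultra)
    ultimately have "av (cen m D) \<le> r ^ k" by linarith
    then show ?thesis using c unfolding Bk_def by simp
  qed
  have img: "g m ` ?A \<subseteq> bl (Suc m) ` Bk k"
  proof
    fix E assume "E \<in> g m ` ?A"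
    then obtain D C where DC: "D \<in> bl m ` Bk k" "C \<in> residue_classes av" "E = g m (D, C)" by auto
    let ?c = "cen m D" and ?a = "rep C"
    have c: "?c \<in> Bk k" "?c \<in> vint av" using mem[OF DC(1)] by auto
    have a: "?a \<in> vint av" using rep[OF DC(2)] by auto
    have "av (w0 ^ m * ?a) \<le> r ^ m" using a rpow_pos[of m] unfolding vint_def
      by (simp add: mult av_w0pow mult_left_le)
    moreover have "r ^ m \<le> r ^ k" using assms r_pow_le_iff by simp
    moreover have "av ?c \<le> r ^ k" using c unfolding Bk_def by simp
    moreover have "av (?c + w0 ^ m * ?a) \<le> max (av ?c) (av (w0 ^ m * ?a))" by (rule ultra)
    ultimately have "av (?c + w0 ^ m * ?a) \<le> r ^ k" by linarith
    moreover have "?c + w0 ^ m * ?a \<in> vint av" using c a w0pow_vint vint_add vint_mult by blast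
    ultimately have "?c + w0 ^ m * ?a \<in> Bk k" unfolding Bk_def by simp
    then show "E \<in> bl (Suc m) ` Bk k" using DC(3) unfolding g_def by simp
  qed
  have inj: "inj_on (g m) ?A"
  proof (rule inj_onI)
    fix P P' assume P: "P \<in> ?A" and P': "P' \<in> ?A" and eq: "g m P = g m P'"
    obtain D C where DC: "P = (D, C)" "D \<in> bl m ` Bk k" "C \<in> residue_classes av" using P by auto
    obtain D' C' where DC': "P' = (D', C')" "D' \<in> bl m ` Bk k" "C' \<in> residue_classes av" using P' by auto
    define c where "c = cen m D"
    define c' where "c' = cen m D'"
    define a where "a = rep C"
    define a' where "a' = rep C'"
    have c: "c \<in> vint av" "bl m c = D" using mem[OF DC(2)] c_def by auto
    have c': "c' \<in> vint av" "bl m c' = D'" using mem[OF DC'(2)] c'_def by auto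
    have a: "a \<in> vint av" "cls a = C" using rep[OF DC(3)] a_def by auto
    have a': "a' \<in> vint av" "cls a' = C'" using rep[OF DC'(3)] a'_def by auto
    have v1: "c + w0 ^ m * a \<in> vint av" using c a w0pow_vint vint_add vint_mult by blast
    have v2: "c' + w0 ^ m * a' \<in> vint av" using c' a' w0pow_vint vint_add vint_mult by blast
    have "bl (Suc m) (c + w0 ^ m * a) = bl (Suc m) (c' + w0 ^ m * a')"
      using eq DC(1) DC'(1) unfolding g_def c_def c'_def a_def a'_def by simp
    then have close: "av ((c + w0 ^ m * a) - (c' + w0 ^ m * a')) \<le> r ^ Suc m"
      using bl_eq_iff[OF v1 v2] by simp
    have split: "(c + w0 ^ m * a) - (c' + w0 ^ m * a') = (c - c') + w0 ^ m * (a - a')"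
      by (simp add: algebra_simps)
    have small: "av (w0 ^ m * (a - a')) \<le> r ^ m"
    proof -
      have "av (a - a') \<le> 1" using ultra_diff[of a a'] a a' unfolding vint_def by simp
      then show ?thesis using rpow_pos[of m] by (simp add: mult av_w0pow mult_left_le)
    qed
    have rs: "r ^ Suc m < r ^ m" by (subst r_pow_lt_iff) simp
    have DD: "D = D'"
    proof (rule ccontr)
      assume "D \<noteq> D'"
      then have "bl m c \<noteq> bl m c'" using c c' by simp
      then have "\<not> av (c - c') \<le> r ^ m" using bl_eq_iff[OF c(1) c'(1), of m] by simp
      then have "av (w0 ^ m * (a - a')) < av (c - c')" using small by simp
      then have "av ((c - c') + w0 ^ m * (a - a')) = av (c - c')" by (rule strict)
      then show False using close split \<open>\<not> av (c - c') \<le> r ^ m\<close> rs by simp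
    qed
    then have "c = c'" using c_def c'_def by simp
    then have "av (w0 ^ m * (a - a')) \<le> r ^ Suc m" using close split by simp
    then have "r ^ m * av (a - a') \<le> r ^ m * r" by (simp add: mult av_w0pow mult.commute)
    then have "av (a - a') \<le> r" using rpow_pos[of m] mult_le_cancel_left_pos by blast
    then have "av (a - a') < 1" using r_lt1 by simp
    then have "cls a = cls a'" by (rule cls_same)
    then have "C = C'" using a a' by simp
    then show "P = P'" using DD DC(1) DC'(1) by simp
  qed
  have fin: "finite (bl (Suc m) ` Bk k)" using fin_blS Bk_sub by blast
  have "card ?A \<le> card (bl (Suc m) ` Bk k)" using card_inj_on_le[OF inj img fin] .
  moreover have "card ?A = card (bl m ` Bk k) * q" using rc_card by (simp add: card_cartesian_product)
  ultimately show ?thesis by simp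
qed

lemma lower: "q ^ j \<le> card (bl (k + j) ` Bk k)"
proof (induction j)
  case 0
  then show ?case using bl_Bk by simp
next
  case (Suc j)
  have "q ^ Suc j = q ^ j * q" by simp
  also have "\<dots> \<le> card (bl (k + j) ` Bk k) * q" using Suc by simp
  also have "\<dots> \<le> card (bl (Suc (k + j)) ` Bk k)" by (rule grow) simp
  finally show ?case by simp
qed

lemma haar_Bk: "haar_o av q (Bk k) = r ^ k"
proof -
  define F where "F m = real (card (bl m ` Bk k)) / real q ^ m" for m
  have qpos: "0 < real q" using q_gt1 by simp
  have Fk: "F k = r ^ k" unfolding F_def using bl_Bk by (simp add: power_one_over)
  have Fge: "r ^ k \<le> F m" for m
  proof (cases "m \<le> k")
    case True
    have "bl m ` Bk k \<noteq> {}" using zero_Bk by blast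
    then have "1 \<le> card (bl m ` Bk k)" using fin_blS[OF Bk_sub] by (simp add: Suc_le_eq card_gt_0_iff)
    then have "1 / real q ^ m \<le> F m" unfolding F_def using qpos by (simp add: divide_right_mono)
    moreover have "r ^ k \<le> r ^ m" using True r_pow_le_iff by simp
    ultimately show ?thesis by (simp add: power_one_over)
  next
    case False
    then obtain j where j: "m = k + j" by (metis le_add_diff_inverse nat_le_linear)
    have "real (q ^ j) \<le> real (card (bl m ` Bk k))" using lower[of j k] unfolding j by simp
    then have "real q ^ j / real q ^ m \<le> F m" unfolding F_def using qpos by (simp add: divide_right_mono)
    moreover have "real q ^ j / real q ^ m = r ^ k" using j qpos by (simp add: power_add power_one_over)
    ultimately show ?thesis by simp
  qed
  have "haar_o av q (Bk k) = Inf (range F)" unfolding haar_alt F_def by simp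
  also have "\<dots> = r ^ k" by (rule cInf_eq_minimum) (use Fk Fge in \<open>auto intro: range_eqI[of _ F k]\<close>)
  finally show ?thesis .
qed

lemma haar_empty: "haar_o av q {} = 0"
  unfolding haar_o_def by simp

end



context nalf
begin

lemma ord_eq: assumes "av x = r ^ e" shows "ord av q x = int e"
  unfolding ord_def
proof (rule the_equality)
  have qp: "0 < real q" using q_gt1 by simp
  show "av x = real q powi (- int e)" using assms
    by (simp add: power_int_minus power_one_over divide_inverse power_inverse)
  fix n assume n: "av x = real q powi (- n)"
  have eq: "real q powi (- n) = real q powi (- int e)"
    using n assms by (simp add: power_int_minus power_one_over divide_inverse power_inverse)
  show "n = int e"
  proof (rule ccontr)
    assume "n \<noteq> int e"
    then consider "- n < - int e" | "- int e < - n" by linarith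
    then show False
    proof cases
      case 1 then have "real q powi (- n) < real q powi (- int e)"
        using q_gt1 by (intro power_int_strict_increasing) auto
      then show False using eq by simp
    next
      case 2 then have "real q powi (- int e) < real q powi (- n)"
        using q_gt1 by (intro power_int_strict_increasing) auto
      then show False using eq by simp
    qed
  qed
qed

context
  fixes Delta t :: 'a and T :: nat
  assumes Dv: "av Delta = r" and tv: "av t = r ^ T"
begin

lemma avD: assumes "av x = r ^ v" shows "av (Delta * x ^ 2) = r ^ (2 * v + 1)"
  using assms Dv by (simp add: mult avpow power_mult power_add mult.commute)

lemma avt2: "av (t ^ 2) = r ^ (2 * T)"
proof -
  have "av (t ^ 2) = (r ^ T) ^ 2" using tv by (simp add: avpow)
  also have "\<dots> = r ^ (2 * T)" by (simp only: power_mult[symmetric] mult.commute)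
  finally show ?thesis .
qed

lemma parity: assumes "x \<in> vint av" shows "av (Delta * x ^ 2) \<noteq> av (t ^ 2)"
proof (cases "x = 0")
  case True
  have "av (Delta * x^2) = 0" using True by simp
  moreover have "0 < av (t^2)" unfolding avt2 by (rule rpow_pos)
  ultimately show ?thesis by simp
next
  case False
  then obtain v where v: "av x = r ^ v" using disc_nat assms unfolding vint_def by blast
  have "r ^ (2 * v + 1) \<noteq> r ^ (2 * T)"
  proof
    assume "r ^ (2 * v + 1) = r ^ (2 * T)"
    then have "2 * v + 1 = 2 * T" using r_pow_le_iff by (metis order_antisym order_refl)
    then show False by presburger
  qed
  then show ?thesis using avD[OF v] avt2 by simp
qed

lemma val_cond: assumes "x \<in> vint av"
  shows "av (Delta * x ^ 2 - t ^ 2) \<le> r ^ N \<longleftrightarrow> N \<le> 2 * T \<and> av x \<le> r ^ (N div 2)"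
proof (cases "x = 0")
  case True
  have "av (Delta * x ^ 2 - t ^ 2) = r ^ (2 * T)" using True avt2 by simp
  then show ?thesis using True r_pow_le_iff rpow_pos[of "N div 2"] by auto
next
  case False
  then obtain v where v: "av x = r ^ v" using disc_nat assms unfolding vint_def by blast
  have a1: "av (Delta * x ^ 2) = r ^ (2 * v + 1)" by (rule avD[OF v])
  have a2: "av (- (t ^ 2)) = r ^ (2 * T)" using avt2 by simp
  have ne: "2 * v + 1 \<noteq> 2 * T" by presburger
  show ?thesis
  proof (cases "2 * T < 2 * v + 1")
    case True
    then have "av (Delta * x ^ 2) < av (- (t ^ 2))" unfolding a1 a2 r_pow_lt_iff .
    then have "av (- (t ^ 2) + Delta * x ^ 2) = av (- (t ^ 2))" by (rule strict)
    then have e: "av (Delta * x ^ 2 - t ^ 2) = r ^ (2 * T)" using a2 by (simp add: algebra_simps)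
    have "N \<le> 2 * T \<longleftrightarrow> N \<le> 2 * T \<and> N div 2 \<le> v" using True by auto
    then show ?thesis unfolding e v r_pow_le_iff .
  next
    case False
    then have "2 * v + 1 < 2 * T" using ne by simp
    then have "av (- (t ^ 2)) < av (Delta * x ^ 2)" unfolding a1 a2 r_pow_lt_iff .
    then have "av (Delta * x ^ 2 + - (t ^ 2)) = av (Delta * x ^ 2)" by (rule strict)
    then have e: "av (Delta * x ^ 2 - t ^ 2) = r ^ (2 * v + 1)" using a1 by simp
    have "N \<le> 2 * v + 1 \<longleftrightarrow> N \<le> 2 * T \<and> N div 2 \<le> v" using \<open>2 * v + 1 < 2 * T\<close> by auto
    then show ?thesis unfolding e v r_pow_le_iff .
  qed
qed

lemma set_eq: assumes "M \<noteq> 0" "av M = r ^ N"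
  shows "{x \<in> vint av. \<exists>y \<in> vint av. Delta * x ^ 2 - t ^ 2 = M * y}
       = (if N \<le> 2 * T then Bk (N div 2) else {})"
proof -
  have "(\<exists>y \<in> vint av. Delta * x ^ 2 - t ^ 2 = M * y) \<longleftrightarrow> av (Delta * x ^ 2 - t ^ 2) \<le> r ^ N" for x
  proof
    assume "\<exists>y \<in> vint av. Delta * x ^ 2 - t ^ 2 = M * y"
    then obtain y where y: "y \<in> vint av" "Delta * x ^ 2 - t ^ 2 = M * y" by blast
    have "av (M * y) \<le> r ^ N" using y assms rpow_pos[of N] unfolding vint_def
      by (simp add: mult mult_left_le)
    then show "av (Delta * x ^ 2 - t ^ 2) \<le> r ^ N" using y by simp
  next
    assume h: "av (Delta * x ^ 2 - t ^ 2) \<le> r ^ N"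
    define y where "y = (Delta * x ^ 2 - t ^ 2) / M"
    have "av y \<le> 1" unfolding y_def using h assms rpow_pos[of N] by (simp add: avdiv)
    then have "y \<in> vint av" unfolding vint_def by simp
    moreover have "Delta * x ^ 2 - t ^ 2 = M * y" unfolding y_def using assms by simp
    ultimately show "\<exists>y \<in> vint av. Delta * x ^ 2 - t ^ 2 = M * y" by blast
  qed
  then show ?thesis using val_cond unfolding Bk_def by auto
qed

lemma set_eq0:
  "{x \<in> vint av. \<exists>y \<in> vint av. Delta * x ^ 2 - t ^ 2 = 0 * y} = {}"
proof -
  have "Delta * x ^ 2 - t ^ 2 \<noteq> 0" if "x \<in> vint av" for x
    using parity[OF that] by auto
  then show ?thesis by auto
qed

end
end



lemma fpow: fixes f :: "nat \<Rightarrow> 'b::comm_ring_1"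
  assumes "\<And>l. f (l + 2) = X * f l" shows "f (2 * n + i) = X ^ n * f i"
proof (induction n)
  case 0 then show ?case by simp
next
  case (Suc n)
  have "f (2 * Suc n + i) = f ((2 * n + i) + 2)" by (simp add: algebra_simps)
  also have "\<dots> = X * f (2 * n + i)" by (rule assms)
  finally show ?case using Suc by simp
qed

lemma sum_pairs: fixes f :: "nat \<Rightarrow> 'b::comm_ring_1"
  assumes "\<And>l. f (l + 2) = X * f l"
  shows "(\<Sum>l<2 * n. f l) * (1 - X) = (f 0 + f 1) * (1 - X ^ n)"
proof (induction n)
  case 0 then show ?case by simp
next
  case (Suc n)
  let ?S = "(\<Sum>l<2 * n. f l)"
  have a: "(\<Sum>l<2 * Suc n. f l) = ?S + f (2 * n + 0) + f (2 * n + 1)"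
    by (simp add: algebra_simps)
  have s: "(\<Sum>l<2 * Suc n. f l) = ?S + X ^ n * (f 0 + f 1)"
    unfolding a fpow[where f=f and X=X and n=n and i=0, OF assms]
      fpow[where f=f and X=X and n=n and i=1, OF assms] by (simp add: algebra_simps)
  have "(\<Sum>l<2 * Suc n. f l) * (1 - X) = ?S * (1 - X) + X ^ n * (f 0 + f 1) * (1 - X)"
    unfolding s by (simp add: algebra_simps)
  also have "\<dots> = (f 0 + f 1) * (1 - X ^ n) + X ^ n * (f 0 + f 1) * (1 - X)" using Suc by simp
  also have "\<dots> = (f 0 + f 1) * (1 - X ^ Suc n)" by (simp add: algebra_simps)
  finally show ?case .
qed

lemma fin_odd: fixes f :: "nat \<Rightarrow> 'b::field"
  assumes "\<And>l. f (l + 2) = X * f l" "X \<noteq> 1"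
  shows "(\<Sum>l<2 * n. f l) = f 0 * (1 - X ^ n) / (1 - X) + f 1 * (1 - X ^ n) / (1 - X)"
proof -
  have nz: "1 - X \<noteq> 0" using assms by simp
  have "(\<Sum>l<2 * n. f l) = (f 0 + f 1) * (1 - X ^ n) / (1 - X)"
    using sum_pairs[where f=f and X=X and n=n, OF assms(1)] nz by (simp add: eq_divide_eq)
  then show ?thesis by (simp add: add_divide_distrib distrib_right)
qed

lemma fin_even: fixes f :: "nat \<Rightarrow> 'b::field"
  assumes "\<And>l. f (l + 2) = X * f l" "X \<noteq> 1"
  shows "(\<Sum>l<2 * n + 1. f l) = f 0 * (1 - X ^ (n + 1)) / (1 - X) + f 1 * (1 - X ^ n) / (1 - X)"
proof -
  have nz: "1 - X \<noteq> 0" using assms by simp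
  let ?S = "(\<Sum>l<2 * n. f l)"
  have a: "(\<Sum>l<2 * n + 1. f l) = ?S + X ^ n * f 0"
    using fpow[where f=f and X=X and n=n and i=0, OF assms(1)] by simp
  have "(\<Sum>l<2 * n + 1. f l) * (1 - X) = ?S * (1 - X) + X ^ n * f 0 * (1 - X)"
    unfolding a by (simp add: algebra_simps)
  also have "\<dots> = (f 0 + f 1) * (1 - X ^ n) + X ^ n * f 0 * (1 - X)"
    using sum_pairs[where f=f and X=X and n=n, OF assms(1)] by simp
  also have "\<dots> = f 0 * (1 - X ^ (n + 1)) + f 1 * (1 - X ^ n)" by (simp add: algebra_simps)
  finally have "(\<Sum>l<2 * n + 1. f l) = (f 0 * (1 - X ^ (n + 1)) + f 1 * (1 - X ^ n)) / (1 - X)"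
    using nz by (simp add: eq_divide_eq)
  then show ?thesis by (simp add: add_divide_distrib)
qed




theorem proposition5p3:
  fixes av :: "'a::field \<Rightarrow> real" and w0 Delta t :: 'a and q T :: nat
    and beta z w :: complex
  assumes "nonarch_local_field av w0 q"
    and "residue_char_2 av"
    and "av Delta = av w0"
    and "0 < Re beta"
    and "z = (of_nat q :: complex) powr (- beta)"
    and "w = z * inverse (of_nat q :: complex)"
    and "t \<in> vint av" and "t \<noteq> 0"
    and "av t = (1 / real q) ^ T"
  shows "XB av w0 q Delta beta (t ^ 2) =
    (if av (t ^ 2) \<le> av 2 then
       complex_of_real (av w0 powi \<lfloor>real_of_int (ord av q 2) / 2\<rfloor>)
         * (1 - (z * w) powi (int T + 1 - \<lceil>real_of_int (ord av q 2) / 2\<rceil>)) / (1 - z * w)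
       + z * complex_of_real (av w0 powi \<lceil>real_of_int (ord av q 2) / 2\<rceil>)
         * (1 - (z * w) powi (int T - \<lfloor>real_of_int (ord av q 2) / 2\<rfloor>)) / (1 - z * w)
     else 0)"
proof -
  interpret nalf av w0 q by (rule nalf.intro) (rule assms(1))
  have Dv: "av Delta = r" using assms(3) w0_val by simp
  have tv: "av t = r ^ T" using assms(9) .
  have qpos: "0 < real q" using q_gt1 by simp
  define S where "S l = {x \<in> vint av. \<exists>y \<in> vint av. Delta * x ^ 2 - t ^ 2 = 2 * w0 ^ l * y}" for l
  have XBe: "XB av w0 q Delta beta (t ^ 2) = (\<Sum>l. z ^ l * complex_of_real (haar_o av q (S l)))"
    unfolding XB_def Xl_def S_def assms(5) by simp
  have t2pos: "0 < av (t ^ 2)" unfolding avt2[OF Dv tv] by (rule rpow_pos)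
  show ?thesis
  proof (cases "(2::'a) = 0")
    case True
    have "S l = {}" for l
    proof -
      have "Delta * x ^ 2 - t ^ 2 \<noteq> 2 * w0 ^ l * y" if "x \<in> vint av" for x y
        using parity[OF Dv tv that] True by auto
      then show ?thesis unfolding S_def by auto
    qed
    then have "XB av w0 q Delta beta (t ^ 2) = 0" unfolding XBe by (simp add: haar_empty)
    moreover have "\<not> av (t ^ 2) \<le> av 2" using True t2pos by simp
    ultimately show ?thesis by simp
  next
    case False
    have "av 2 < 1" using assms(2) unfolding residue_char_2_def .
    then obtain e where e: "av 2 = r ^ e" using disc_nat[OF False] by fastforce
    have ord2: "ord av q 2 = int e" by (rule ord_eq[OF e])
    have Sl: "S l = (if e + l \<le> 2 * T then Bk ((e + l) div 2) else {})" for l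
    proof -
      have M: "2 * w0 ^ l \<noteq> 0" using False w0pow_nz by simp
      have Mv: "av (2 * w0 ^ l) = r ^ (e + l)" using e by (simp add: mult av_w0pow power_add)
      show ?thesis unfolding S_def by (rule set_eq[OF Dv tv M Mv])
    qed
    have H: "haar_o av q (S l) = (if e + l \<le> 2 * T then r ^ ((e + l) div 2) else 0)" for l
      unfolding Sl by (simp add: haar_Bk haar_empty)
    have cond: "av (t ^ 2) \<le> av 2 \<longleftrightarrow> e \<le> 2 * T"
      unfolding avt2[OF Dv tv] e r_pow_le_iff ..
    show ?thesis
    proof (cases "e \<le> 2 * T")
      case False
      then have "XB av w0 q Delta beta (t ^ 2) = 0" unfolding XBe H by simp
      then show ?thesis using cond False by simp
    next
      case True
      define f where "f l = z ^ l * complex_of_real (r ^ ((e + l) div 2))" for l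
      have XBs: "XB av w0 q Delta beta (t ^ 2) = (\<Sum>l<2 * T - e + 1. f l)"
      proof -
        have "XB av w0 q Delta beta (t ^ 2) = (\<Sum>l<2 * T - e + 1. z ^ l * complex_of_real (haar_o av q (S l)))"
          unfolding XBe by (rule suminf_finite) (use True in \<open>auto simp: H\<close>)
        also have "\<dots> = (\<Sum>l<2 * T - e + 1. f l)"
        proof (rule sum.cong)
          fix l assume "l \<in> {..<2 * T - e + 1}"
          then have "e + l \<le> 2 * T" using True by auto
          then show "z ^ l * complex_of_real (haar_o av q (S l)) = f l" unfolding f_def H by simp
        qed simp
        finally show ?thesis .
      qed
      define X where "X = z * w"
      have rr: "complex_of_real r = inverse (of_nat q)" by (simp add: divide_inverse)
      have frec: "f (l + 2) = X * f l" for l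
      proof -
        have "(e + (l + 2)) div 2 = Suc ((e + l) div 2)" by simp
        then have "f (l + 2) = z ^ l * (z * z) * complex_of_real (r ^ ((e + l) div 2) * r)"
          unfolding f_def by (simp add: power_add)
        also have "\<dots> = X * f l" unfolding f_def X_def assms(6) rr[symmetric]
          by (simp add: algebra_simps)
        finally show ?thesis .
      qed
      have nz: "norm z < 1"
      proof -
        have "norm z = Re (of_nat q) powr Re (- beta)" unfolding assms(5)
          by (rule norm_powr_real_powr) auto
        also have "\<dots> = real q powr (- Re beta)" by simp
        also have "\<dots> < 1" using q_gt1 assms(4) by (intro powr_less_one) auto
        finally show ?thesis .
      qed
      have X1: "X \<noteq> 1"
      proof -
        have "norm X = norm z * norm z / real q" unfolding X_def assms(6)
          by (simp add: norm_mult norm_inverse divide_inverse)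
        also have "\<dots> < 1"
        proof -
          have "norm z * norm z \<le> 1" using nz by (intro mult_le_one) auto
          moreover have "1 < real q" using q_gt1 by simp
          ultimately show ?thesis using qpos by (simp add: divide_less_eq)
        qed
        finally show ?thesis by auto
      qed
      have w0a: "av w0 powi int k = r ^ k" for k using w0_val by simp
      define a where "a = e div 2"
      have a: "e = 2 * a \<or> e = 2 * a + 1" unfolding a_def by presburger
      show ?thesis
      proof (cases "e = 2 * a")
        case ev: True
        have aT: "a \<le> T" using True ev by simp
        have fl: "\<lfloor>real_of_int (ord av q 2) / 2\<rfloor> = int a" unfolding ord2 ev by simp
        have ce: "\<lceil>real_of_int (ord av q 2) / 2\<rceil> = int a" unfolding ord2 ev by simp
        have ex1: "int T + 1 - int a = int (T - a + 1)" using aT by simp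
        have ex2: "int T - int a = int (T - a)" using aT by simp
        have n: "2 * T - e + 1 = 2 * (T - a) + 1" using ev aT by simp
        have f0: "f 0 = complex_of_real (r ^ a)" unfolding f_def ev by simp
        have f1: "f 1 = z * complex_of_real (r ^ a)" unfolding f_def ev by simp
        show ?thesis
          unfolding XBs n fin_even[where f=f, OF frec X1] fl ce ex1 ex2 power_int_of_nat w0a
            f0 f1 X_def[symmetric] using cond True by (simp add: w0_val)
      next
        case od: False
        then have ev: "e = 2 * a + 1" using a by simp
        have aT: "a < T" using True ev by simp
        have fl: "\<lfloor>real_of_int (ord av q 2) / 2\<rfloor> = int a" unfolding ord2 ev
          by (rule floor_unique) auto
        have ce: "\<lceil>real_of_int (ord av q 2) / 2\<rceil> = int a + 1" unfolding ord2 ev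
          by (rule ceiling_unique) auto
        have ex1: "int T + 1 - (int a + 1) = int (T - a)" using aT by simp
        have ex2: "int T - int a = int (T - a)" using aT by simp
        have n: "2 * T - e + 1 = 2 * (T - a)" using ev aT by simp
        have f0: "f 0 = complex_of_real (r ^ a)" unfolding f_def ev by simp
        have f1: "f 1 = z * complex_of_real (r ^ (a + 1))" unfolding f_def ev by simp
        have ce': "int a + 1 = int (a + 1)" by simp
        show ?thesis
          unfolding XBs n fin_odd[where f=f, OF frec X1] fl ce ex1 ex2 ce' power_int_of_nat w0a
            f0 f1 X_def[symmetric] using cond True by (simp add: w0_val ex2)
      qed
    qed
  qed
qed


end
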